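(* Let $r\ge2$, $d_1=1$, $\lambda_1=0$, $d_i\ge2$ integers and $\lambda_i>0$ for $i=2,\dots,r$, $n=\sum_id_i$. In $\mathbb R^{2r-1}$ with coordinates $(X_1,\dots,X_r,Y_2,\dots,Y_r)$ let $\mathcal L=\sum_{i=1}^rX_i^2+\sum_{i=2}^r\lambda_iY_i^2-1$, $\mathcal H=\sum_{i=1}^r\sqrt{d_i}X_i$, $\mathcal D=\{\mathcal L=0,\ \mathcal H=1\}\cap\{Y_i>0\ (i\ge2),\ |X_1-1|<\sqrt2\}$, and $$\hat{\mathscr F}=\frac{1-\frac{1}{n-1}(1-X_1)^2}{\prod_{i=2}^r\big(\sqrt{\lambda_i}\,Y_i\big)^{\frac{2d_i}{n-1}}}.$$ Then $\hat{\mathscr F}$, restricted to $\mathcal D$ (an open subset of the smooth submanifold $\{\mathcal L=0,\mathcal H=1\}$), has a unique critical point in $\mathcal D$, and this point is the global minimum point of $\hat{\mathscr F}$ on $\mathcal D$. *)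

theory Defs
  imports "HOL-Analysis.Analysis"
begin

text \<open>A point of R^(2r-1) with coordinates (X_1..X_r, Y_2..Y_r) is represented as a pair
  (X, Y) of functions nat => real, with X i = 0 for i outside {1..r} and Y i = 0 for
  i outside {2..r} (so that the representation is unique).\<close>

type_synonym pt = "(nat \<Rightarrow> real) \<times> (nat \<Rightarrow> real)"

definition coord_space :: "nat \<Rightarrow> pt set" where
  "coord_space r = {(X, Y). (\<forall>i. i \<notin> {1..r} \<longrightarrow> X i = 0) \<and> (\<forall>i. i \<notin> {2..r} \<longrightarrow> Y i = 0)}"

definition pt_line :: "pt \<Rightarrow> pt \<Rightarrow> real \<Rightarrow> pt" where
  "pt_line p v t = ((\<lambda>i. fst p i + t * fst v i), (\<lambda>i. snd p i + t * snd v i))"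

definition LL :: "nat \<Rightarrow> (nat \<Rightarrow> real) \<Rightarrow> pt \<Rightarrow> real" where
  "LL r lam p = (\<Sum>i=1..r. (fst p i)\<^sup>2) + (\<Sum>i=2..r. lam i * (snd p i)\<^sup>2) - 1"

definition HH :: "nat \<Rightarrow> (nat \<Rightarrow> nat) \<Rightarrow> pt \<Rightarrow> real" where
  "HH r d p = (\<Sum>i=1..r. sqrt (real (d i)) * fst p i)"

definition DD :: "nat \<Rightarrow> (nat \<Rightarrow> nat) \<Rightarrow> (nat \<Rightarrow> real) \<Rightarrow> pt set" where
  "DD r d lam = {p \<in> coord_space r. LL r lam p = 0 \<and> HH r d p = 1 \<and>
      (\<forall>i\<in>{2..r}. snd p i > 0) \<and> \<bar>fst p 1 - 1\<bar> < sqrt 2}"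

definition FF :: "nat \<Rightarrow> (nat \<Rightarrow> nat) \<Rightarrow> (nat \<Rightarrow> real) \<Rightarrow> pt \<Rightarrow> real" where
  "FF r d lam p =
     (let n = (\<Sum>i=1..r. d i) in
      (1 - (1 - fst p 1)\<^sup>2 / (real n - 1)) /
      (\<Prod>i=2..r. (sqrt (lam i) * snd p i) powr (2 * real (d i) / (real n - 1))))"

text \<open>Critical point of f restricted to the submanifold {L = 0, H = 1}: the differential of f
  vanishes on the tangent space, i.e. on all vectors v of R^(2r-1) with dL(p) v = 0 and
  dH(p) v = 0; differentials applied to v are expressed as directional derivatives
  d/dt g(p + t v) at t = 0.\<close>
definition crit_on_level :: "nat \<Rightarrow> (nat \<Rightarrow> nat) \<Rightarrow> (nat \<Rightarrow> real) \<Rightarrow> (pt \<Rightarrow> real) \<Rightarrow> pt \<Rightarrow> bool" where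
  "crit_on_level r d lam f p \<longleftrightarrow>
     p \<in> DD r d lam \<and>
     (\<forall>v \<in> coord_space r.
        ((\<lambda>t. LL r lam (pt_line p v t)) has_real_derivative 0) (at 0) \<and>
        ((\<lambda>t. HH r d (pt_line p v t)) has_real_derivative 0) (at 0) \<longrightarrow>
        ((\<lambda>t. f (pt_line p v t)) has_real_derivative 0) (at 0))"

end

theory Submission
  imports Defs
begin


lemma deriv_prod_pos:
  fixes g :: "nat \<Rightarrow> real \<Rightarrow> real"
  assumes "finite A" "\<And>i. i \<in> A \<Longrightarrow> (g i has_real_derivative g' i) (at x)"
     "\<And>i. i \<in> A \<Longrightarrow> g i x > 0"
  shows "((\<lambda>t. \<Prod>i\<in>A. g i t) has_real_derivative (\<Prod>i\<in>A. g i x) * (\<Sum>i\<in>A. g' i / g i x)) (at x)"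
  using assms
proof (induction A rule: finite_induct)
  case empty
  then show ?case by simp
next
  case (insert a A)
  have h1: "(g a has_real_derivative g' a) (at x)" using insert by auto
  have h2: "((\<lambda>t. \<Prod>i\<in>A. g i t) has_real_derivative (\<Prod>i\<in>A. g i x) * (\<Sum>i\<in>A. g' i / g i x)) (at x)"
    using insert by auto
  have pa: "g a x > 0" using insert by auto
  have "((\<lambda>t. g a t * (\<Prod>i\<in>A. g i t)) has_real_derivative
     g a x * ((\<Prod>i\<in>A. g i x) * (\<Sum>i\<in>A. g' i / g i x)) + g' a * (\<Prod>i\<in>A. g i x)) (at x)"
    using DERIV_mult[OF h1 h2] by (simp add: algebra_simps)
  moreover have "g a x * ((\<Prod>i\<in>A. g i x) * (\<Sum>i\<in>A. g' i / g i x)) + g' a * (\<Prod>i\<in>A. g i x)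
     = (g a x * (\<Prod>i\<in>A. g i x)) * (g' a / g a x + (\<Sum>i\<in>A. g' i / g i x))"
    using pa by (simp add: field_simps)
  ultimately show ?case using insert by simp
qed

lemma LL_deriv: "((\<lambda>t. LL r lam (pt_line p v t)) has_real_derivative
   (\<Sum>i=1..r. 2 * fst p i * fst v i) + (\<Sum>i=2..r. 2 * lam i * snd p i * snd v i)) (at 0)"
  unfolding LL_def pt_line_def
  by (auto intro!: derivative_eq_intros simp: power2_eq_square algebra_simps)

lemma HH_deriv: "((\<lambda>t. HH r d (pt_line p v t)) has_real_derivative
   (\<Sum>i=1..r. sqrt (real (d i)) * fst v i)) (at 0)"
  unfolding HH_def pt_line_def
  by (auto intro!: derivative_eq_intros simp: mult.commute)

lemma FF_deriv:
  fixes r :: nat and d :: "nat \<Rightarrow> nat" and lam :: "nat \<Rightarrow> real" and p v :: pt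
  assumes pos: "\<forall>i\<in>{2..r}. snd p i > 0 \<and> lam i > 0"
  defines "N \<equiv> real (\<Sum>i=1..r. d i) - 1"
  defines "num \<equiv> 1 - (1 - fst p 1)\<^sup>2 / N"
  defines "den \<equiv> \<Prod>i=2..r. (sqrt (lam i) * snd p i) powr (2 * real (d i) / N)"
  shows "((\<lambda>t. FF r d lam (pt_line p v t)) has_real_derivative
     (2 * (1 - fst p 1) * fst v 1 / N * den - num * (den * (\<Sum>i=2..r. 2 * real (d i) / N * snd v i / snd p i))) / (den * den)) (at 0)"
proof -
  define g where "g i t = (sqrt (lam i) * (snd p i + t * snd v i)) powr (2 * real (d i) / N)" for i t
  define g' where "g' i = g i 0 * (2 * real (d i) / N * snd v i / snd p i)" for i
  have gd: "(g i has_real_derivative g' i) (at 0)" if "i \<in> {2..r}" for i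
  proof -
    have l: "lam i > 0" "snd p i > 0" using pos that by auto
    have "((\<lambda>t. (sqrt (lam i) * (snd p i + t * snd v i)) powr (2 * real (d i) / N)) has_real_derivative
      ((sqrt (lam i) * (snd p i + 0 * snd v i)) powr (2 * real (d i) / N)) *
        (0 * ln (sqrt (lam i) * (snd p i + 0 * snd v i)) + (sqrt (lam i) * snd v i) * (2 * real (d i) / N) / (sqrt (lam i) * (snd p i + 0 * snd v i)))) (at 0)"
      apply (rule DERIV_powr)
        apply (auto intro!: derivative_eq_intros simp: l)
      done
    then show ?thesis unfolding g_def g'_def using l by (simp add: field_simps)
  qed
  have gp: "g i 0 > 0" if "i \<in> {2..r}" for i using pos that unfolding g_def by force
  have dd: "((\<lambda>t. \<Prod>i=2..r. g i t) has_real_derivative (\<Prod>i=2..r. g i 0) * (\<Sum>i=2..r. g' i / g i 0)) (at 0)"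
    by (rule deriv_prod_pos) (auto intro: gd gp)
  have den_eq: "(\<Prod>i=2..r. g i 0) = den" unfolding g_def den_def by simp
  have s_eq: "(\<Sum>i=2..r. g' i / g i 0) = (\<Sum>i=2..r. 2 * real (d i) / N * snd v i / snd p i)"
  proof (rule sum.cong)
    fix i assume "i \<in> {2..r}"
    then show "g' i / g i 0 = 2 * real (d i) / N * snd v i / snd p i" using gp[of i] by (simp add: g'_def)
  qed simp
  have denpos: "den > 0" unfolding den_eq[symmetric] by (rule prod_pos) (use gp in auto)
  have nd: "((\<lambda>t. 1 - (1 - (fst p 1 + t * fst v 1))\<^sup>2 / N) has_real_derivative 2 * (1 - fst p 1) * fst v 1 / N) (at 0)"
    by (cases "N = 0") (auto intro!: derivative_eq_intros simp: power2_eq_square field_simps)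
  have eq: "FF r d lam (pt_line p v t) = (1 - (1 - (fst p 1 + t * fst v 1))\<^sup>2 / N) / (\<Prod>i=2..r. g i t)" for t
    unfolding FF_def pt_line_def g_def N_def Let_def by simp
  show ?thesis unfolding eq
    using DERIV_divide[OF nd dd] denpos
    unfolding den_eq s_eq num_def by simp
qed

lemma deriv_zero_iff: "(f has_real_derivative D) (at x) \<Longrightarrow> (f has_real_derivative 0) (at x) \<longleftrightarrow> D = 0"
  by (metis DERIV_unique)

lemma den_pos:
  assumes "\<forall>i\<in>{2..r}. snd p i > 0 \<and> lam i > 0"
  shows "(\<Prod>i=2..r. (sqrt (lam i) * snd p i) powr e i) > 0"
  by (rule prod_pos) (use assms in force)

lemma alg1:
  fixes N den u V A S :: real
  assumes "N > 0" "den > 0"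
  shows "(2 * u * V / N * den - A * (den * (2 / N * S))) / (den * den) = 0 \<longleftrightarrow> u * V = A * S"
proof -
  have "(2 * u * V / N * den - A * (den * (2 / N * S))) / (den * den) = 2 * (u * V - A * S) / (N * den)"
    using assms by (simp add: field_simps)
  then show ?thesis using assms by simp
qed

lemma crit_char:
  fixes r :: nat and d :: "nat \<Rightarrow> nat" and lam :: "nat \<Rightarrow> real" and p :: pt
  assumes lp: "\<forall>i\<in>{2..r}. lam i > 0" and Npos: "real (\<Sum>i=1..r. d i) - 1 > 0"
  shows "crit_on_level r d lam (FF r d lam) p \<longleftrightarrow> p \<in> DD r d lam \<and>
    (\<forall>v\<in>coord_space r. (\<Sum>i=1..r. fst p i * fst v i) + (\<Sum>i=2..r. lam i * snd p i * snd v i) = 0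
       \<and> (\<Sum>i=1..r. sqrt (real (d i)) * fst v i) = 0 \<longrightarrow>
       (1 - fst p 1) * fst v 1 = (1 - (1 - fst p 1)\<^sup>2 / (real (\<Sum>i=1..r. d i) - 1)) * (\<Sum>i=2..r. real (d i) * snd v i / snd p i))"
proof (cases "p \<in> DD r d lam")
  case False
  then show ?thesis unfolding crit_on_level_def by simp
next
  case True
  define N where "N = real (\<Sum>i=1..r. d i) - 1"
  have N0: "N > 0" using Npos N_def by simp
  have pos: "\<forall>i\<in>{2..r}. snd p i > 0 \<and> lam i > 0" using True lp unfolding DD_def by auto
  define den where "den = (\<Prod>i=2..r. (sqrt (lam i) * snd p i) powr (2 * real (d i) / N))"
  have dp: "den > 0" unfolding den_def by (rule den_pos[OF pos])
  have key: "(((\<lambda>t. LL r lam (pt_line p v t)) has_real_derivative 0) (at 0) \<and>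
        ((\<lambda>t. HH r d (pt_line p v t)) has_real_derivative 0) (at 0) \<longrightarrow>
        ((\<lambda>t. FF r d lam (pt_line p v t)) has_real_derivative 0) (at 0))
     \<longleftrightarrow> ((\<Sum>i=1..r. fst p i * fst v i) + (\<Sum>i=2..r. lam i * snd p i * snd v i) = 0
       \<and> (\<Sum>i=1..r. sqrt (real (d i)) * fst v i) = 0 \<longrightarrow>
       (1 - fst p 1) * fst v 1 = (1 - (1 - fst p 1)\<^sup>2 / (real (\<Sum>i=1..r. d i) - 1)) * (\<Sum>i=2..r. real (d i) * snd v i / snd p i))" for v
  proof -
    have e1: "((\<lambda>t. LL r lam (pt_line p v t)) has_real_derivative 0) (at 0) \<longleftrightarrow>
       (\<Sum>i=1..r. fst p i * fst v i) + (\<Sum>i=2..r. lam i * snd p i * snd v i) = 0"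
    proof -
      have "(\<Sum>i=1..r. 2 * fst p i * fst v i) + (\<Sum>i=2..r. 2 * lam i * snd p i * snd v i)
        = 2 * ((\<Sum>i=1..r. fst p i * fst v i) + (\<Sum>i=2..r. lam i * snd p i * snd v i))"
        by (simp add: sum_distrib_left algebra_simps)
      then show ?thesis using deriv_zero_iff[OF LL_deriv[of r lam p v]] by (smt (verit))
    qed
    have e2: "((\<lambda>t. HH r d (pt_line p v t)) has_real_derivative 0) (at 0) \<longleftrightarrow>
       (\<Sum>i=1..r. sqrt (real (d i)) * fst v i) = 0"
      using deriv_zero_iff[OF HH_deriv] by simp
    have ss: "(\<Sum>i=2..r. 2 * real (d i) / N * snd v i / snd p i) = 2 / N * (\<Sum>i=2..r. real (d i) * snd v i / snd p i)"
      by (simp add: sum_distrib_left mult.assoc)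
    have e3: "((\<lambda>t. FF r d lam (pt_line p v t)) has_real_derivative 0) (at 0) \<longleftrightarrow>
       (1 - fst p 1) * fst v 1 = (1 - (1 - fst p 1)\<^sup>2 / N) * (\<Sum>i=2..r. real (d i) * snd v i / snd p i)"
    proof -
      have "((\<lambda>t. FF r d lam (pt_line p v t)) has_real_derivative 0) (at 0) \<longleftrightarrow>
        (2 * (1 - fst p 1) * fst v 1 / N * den - (1 - (1 - fst p 1)\<^sup>2 / N) * (den * (\<Sum>i=2..r. 2 * real (d i) / N * snd v i / snd p i))) / (den * den) = 0"
        using deriv_zero_iff[OF FF_deriv[OF pos]] unfolding N_def den_def by simp
      also have "\<dots> \<longleftrightarrow> (1 - fst p 1) * fst v 1 = (1 - (1 - fst p 1)\<^sup>2 / N) * (\<Sum>i=2..r. real (d i) * snd v i / snd p i)"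
        unfolding ss by (rule alg1[OF N0 dp])
      finally show ?thesis .
    qed
    show ?thesis using e1 e2 e3 N_def by simp
  qed
  show ?thesis unfolding crit_on_level_def using True key by blast
qed



lemma wamgm:
  fixes a w :: "nat \<Rightarrow> real"
  assumes "finite A" "\<And>i. i \<in> A \<Longrightarrow> a i > 0" "\<And>i. i \<in> A \<Longrightarrow> w i > 0" "(\<Sum>i\<in>A. w i) = 1"
  shows "(\<Prod>i\<in>A. a i powr w i) \<le> (\<Sum>i\<in>A. w i * a i)"
proof -
  define M where "M = (\<Sum>i\<in>A. w i * a i)"
  have Ane: "A \<noteq> {}" using assms(4) by auto
  have M0: "M > 0" unfolding M_def using assms Ane by (intro sum_pos) auto
  have "(\<Sum>i\<in>A. w i * ln (a i / M)) \<le> (\<Sum>i\<in>A. w i * (a i / M - 1))"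
    by (rule sum_mono) (use assms M0 ln_le_minus_one in \<open>auto intro!: mult_left_mono\<close>)
  also have "\<dots> = (\<Sum>i\<in>A. w i * a i) / M - (\<Sum>i\<in>A. w i)"
    by (simp add: sum_subtractf sum_divide_distrib right_diff_distrib)
  also have "\<dots> = 0" using M0 assms(4) unfolding M_def by simp
  finally have h: "(\<Sum>i\<in>A. w i * ln (a i / M)) \<le> 0" .
  have "(\<Sum>i\<in>A. w i * ln (a i / M)) = (\<Sum>i\<in>A. w i * ln (a i)) - ln M"
  proof -
    have "(\<Sum>i\<in>A. w i * ln (a i / M)) = (\<Sum>i\<in>A. w i * ln (a i) - w i * ln M)"
    proof (rule sum.cong)
      fix i assume "i \<in> A"
      then have "a i > 0" using assms by auto
      then show "w i * ln (a i / M) = w i * ln (a i) - w i * ln M" using M0 by (simp add: ln_div right_diff_distrib)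
    qed simp
    also have "\<dots> = (\<Sum>i\<in>A. w i * ln (a i)) - ln M"
      by (simp add: sum_subtractf sum_distrib_right[symmetric] assms(4))
    finally show ?thesis .
  qed
  with h have h2: "(\<Sum>i\<in>A. w i * ln (a i)) \<le> ln M" by simp
  have "(\<Prod>i\<in>A. a i powr w i) = (\<Prod>i\<in>A. exp (w i * ln (a i)))"
  proof (rule prod.cong)
    fix i assume "i \<in> A"
    then have "a i > 0" using assms by auto
    then show "a i powr w i = exp (w i * ln (a i))" by (simp add: powr_def mult.commute)
  qed simp
  also have "\<dots> = exp (\<Sum>i\<in>A. w i * ln (a i))" by (simp add: exp_sum assms(1))
  also have "\<dots> \<le> exp (ln M)" using h2 by simp
  also have "\<dots> = M" using M0 by simp
  finally show ?thesis unfolding M_def .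
qed

lemma pow_conv:
  fixes z l N :: real
  assumes "z > 0" "l > 0"
  shows "(sqrt l * z) powr (2 * k / N) = (l * z\<^sup>2) powr (k / N)"
  using assms by (cases "N = 0") (simp_all add: powr_def ln_mult ln_sqrt power2_eq_square field_simps)

lemma sum_split1: "r \<ge> 1 \<Longrightarrow> (\<Sum>i=1..r. f i) = f 1 + (\<Sum>i=2..r. f (i::nat))"
proof -
  assume "r \<ge> 1"
  then have "{1..r} = insert 1 {2..r}" by auto
  then show ?thesis by simp
qed

lemma sum_delta_mult:
  fixes f :: "nat \<Rightarrow> real"
  assumes "finite S"
  shows "(\<Sum>k\<in>S. f k * (if k = i then a else 0)) = (if i \<in> S then f i * a else 0)"
proof -
  have "(\<Sum>k\<in>S. f k * (if k = i then a else 0)) = (\<Sum>k\<in>S. if k = i then f i * a else 0)"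
    by (rule sum.cong) auto
  then show ?thesis using assms by simp
qed

lemma sum_delta_div:
  fixes f g :: "nat \<Rightarrow> real"
  assumes "finite S"
  shows "(\<Sum>k\<in>S. f k * (if k = i then a else 0) / g k) = (if i \<in> S then f i * a / g i else 0)"
proof -
  have "(\<Sum>k\<in>S. f k * (if k = i then a else 0) / g k) = (\<Sum>k\<in>S. if k = i then f i * a / g i else 0)"
    by (rule sum.cong) auto
  then show ?thesis using assms by simp
qed

lemma sum_delta2:
  fixes f :: "nat \<Rightarrow> real"
  assumes "finite S" "i \<in> S" "j \<in> S"
  shows "(\<Sum>k\<in>S. f k * ((if k = i then a else 0) + (if k = j then b else 0))) = f i * a + f j * b"
  using assms by (simp add: distrib_left sum.distrib sum_delta_mult)

lemma sum_delta2_div: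
  fixes f g :: "nat \<Rightarrow> real"
  assumes "finite S" "i \<in> S" "j \<in> S"
  shows "(\<Sum>k\<in>S. f k * ((if k = i then a else 0) + (if k = j then b else 0)) / g k) = f i * a / g i + f j * b / g j"
  using assms by (simp add: distrib_left add_divide_distrib sum.distrib sum_delta_div)



lemma frac_helper:
  fixes a b c e :: real
  assumes "a / b = c / e" "b > 0" "e > 0"
  shows "a * e = c * b"
  using assms by (simp add: frac_eq_eq)

theorem lemma4p4:
  fixes r :: nat and d :: "nat \<Rightarrow> nat" and lam :: "nat \<Rightarrow> real"
  assumes "r \<ge> 2"
    and "d 1 = 1" and "lam 1 = 0"
    and "\<forall>i\<in>{2..r}. d i \<ge> 2 \<and> lam i > 0"
  shows "\<exists>p. crit_on_level r d lam (FF r d lam) p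
            \<and> (\<forall>q. crit_on_level r d lam (FF r d lam) q \<longrightarrow> q = p)
            \<and> (\<forall>q\<in>DD r d lam. FF r d lam p \<le> FF r d lam q)"
proof -
  note r2 = assms(1) and d1 = assms(2)
  have lp: "\<forall>i\<in>{2..r}. lam i > 0" and dp: "\<And>i. i\<in>{2..r} \<Longrightarrow> real (d i) \<ge> 2"
    using assms(4) by auto
  define N where "N = (\<Sum>i=2..r. real (d i))"
  have NN: "real (\<Sum>i=1..r. d i) - 1 = N"
    using sum_split1[of r d] r2 d1 unfolding N_def by simp
  have N2: "N \<ge> 2"
  proof -
    have "real (d 2) \<le> N" unfolding N_def
      by (rule member_le_sum) (use r2 in auto)
    then show ?thesis using dp[of 2] r2 by simp
  qed
  define c where "c = (N - 1) / N\<^sup>2"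
  have c0: "c > 0" unfolding c_def using N2 by simp
  define Xs where "Xs = (\<lambda>i. if i \<in> {2..r} then sqrt (real (d i)) / N else 0)"
  define Ys where "Ys = (\<lambda>i. if i \<in> {2..r} then sqrt (c * real (d i) / lam i) else 0)"
  define ps :: pt where "ps = (Xs, Ys)"
  have Ypos: "Ys i > 0" if "i \<in> {2..r}" for i
    using that lp dp[OF that] c0 unfolding Ys_def by auto
  have Ysq: "lam i * (Ys i)\<^sup>2 = c * real (d i)" if "i \<in> {2..r}" for i
  proof -
    have "lam i > 0" using that lp by auto
    then show ?thesis using that dp[OF that] c0 unfolding Ys_def by simp
  qed
  have char: "crit_on_level r d lam (FF r d lam) q \<longleftrightarrow> q \<in> DD r d lam \<and>
    (\<forall>v\<in>coord_space r. (\<Sum>i=1..r. fst q i * fst v i) + (\<Sum>i=2..r. lam i * snd q i * snd v i) = 0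
       \<and> (\<Sum>i=1..r. sqrt (real (d i)) * fst v i) = 0 \<longrightarrow>
       (1 - fst q 1) * fst v 1 = (1 - (1 - fst q 1)\<^sup>2 / N) * (\<Sum>i=2..r. real (d i) * snd v i / snd q i))" for q
    using crit_char[OF lp, of d q] NN N2 by simp
  have X1: "Xs 1 = 0" unfolding Xs_def by simp
  have sX2: "(\<Sum>i=2..r. (Xs i)\<^sup>2) = 1 / N"
  proof -
    have "(\<Sum>i=2..r. (Xs i)\<^sup>2) = (\<Sum>i=2..r. real (d i) / N\<^sup>2)"
      by (rule sum.cong) (auto simp: Xs_def power_divide)
    also have "\<dots> = N / N\<^sup>2" unfolding N_def by (simp add: sum_divide_distrib)
    also have "\<dots> = 1 / N" using N2 by (simp add: power2_eq_square)
    finally show ?thesis .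
  qed
  have sY2: "(\<Sum>i=2..r. lam i * (Ys i)\<^sup>2) = c * N"
  proof -
    have "(\<Sum>i=2..r. lam i * (Ys i)\<^sup>2) = (\<Sum>i=2..r. c * real (d i))"
      by (rule sum.cong) (auto simp: Ysq)
    then show ?thesis unfolding N_def by (simp add: sum_distrib_left)
  qed
  have sH: "(\<Sum>i=2..r. sqrt (real (d i)) * Xs i) = 1"
  proof -
    have "(\<Sum>i=2..r. sqrt (real (d i)) * Xs i) = (\<Sum>i=2..r. real (d i) / N)"
      by (rule sum.cong) (auto simp: Xs_def)
    also have "\<dots> = N / N" by (simp only: N_def sum_divide_distrib)
    also have "\<dots> = 1" using N2 by simp
    finally show ?thesis .
  qed
  have psDD: "ps \<in> DD r d lam"
  proof -
    have "ps \<in> coord_space r" unfolding coord_space_def ps_def Xs_def Ys_def by auto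
    moreover have "LL r lam ps = 0"
    proof -
      have a: "(\<Sum>i=1..r. (Xs i)\<^sup>2) = 1 / N" using sum_split1[of r "\<lambda>i. (Xs i)\<^sup>2"] r2 X1 sX2 by simp
      have b: "c * N = 1 - 1 / N" using N2 by (simp add: c_def power2_eq_square field_simps)
      show ?thesis unfolding LL_def ps_def using a b sY2 by simp
    qed
    moreover have "HH r d ps = 1"
      unfolding HH_def ps_def using sum_split1[of r "\<lambda>i. sqrt (real (d i)) * Xs i"] r2 X1 sH by simp
    moreover have "\<forall>i\<in>{2..r}. snd ps i > 0" using Ypos unfolding ps_def by auto
    moreover have "\<bar>fst ps 1 - 1\<bar> < sqrt 2" using X1 unfolding ps_def by simp
    ultimately show ?thesis unfolding DD_def by simp
  qed
  have pscrit: "crit_on_level r d lam (FF r d lam) ps"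
    unfolding char
  proof (intro conjI psDD ballI impI)
    fix v :: pt assume v: "v \<in> coord_space r"
    assume h: "(\<Sum>i=1..r. fst ps i * fst v i) + (\<Sum>i=2..r. lam i * snd ps i * snd v i) = 0
       \<and> (\<Sum>i=1..r. sqrt (real (d i)) * fst v i) = 0"
    define T where "T = (\<Sum>i=2..r. real (d i) * snd v i / Ys i)"
    define W where "W = (\<Sum>i=2..r. sqrt (real (d i)) * fst v i)"
    have hH: "fst v 1 + W = 0" using h sum_split1[of r "\<lambda>i. sqrt (real (d i)) * fst v i"] r2 d1
      unfolding W_def by simp
    have s1: "(\<Sum>i=1..r. fst ps i * fst v i) = W / N"
    proof -
      have "(\<Sum>i=2..r. Xs i * fst v i) = (\<Sum>i=2..r. sqrt (real (d i)) * fst v i / N)"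
        by (rule sum.cong) (auto simp: Xs_def)
      then show ?thesis using sum_split1[of r "\<lambda>i. Xs i * fst v i"] r2 X1
        unfolding ps_def W_def by (simp add: sum_divide_distrib)
    qed
    have s2: "(\<Sum>i=2..r. lam i * snd ps i * snd v i) = c * T"
    proof -
      have "(\<Sum>i=2..r. lam i * snd ps i * snd v i) = (\<Sum>i=2..r. c * (real (d i) * snd v i / Ys i))"
      proof (rule sum.cong)
        fix i assume i: "i \<in> {2..r}"
        have "lam i * Ys i = c * real (d i) / Ys i"
          using Ysq[OF i] Ypos[OF i] by (simp add: field_simps power2_eq_square)
        then show "lam i * snd ps i * snd v i = c * (real (d i) * snd v i / Ys i)"
          unfolding ps_def by simp
      qed simp
      then show ?thesis unfolding T_def by (simp add: sum_distrib_left)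
    qed
    have "W / N + c * T = 0" using h s1 s2 by simp
    then have "fst v 1 = N * c * T" using hH N2 by (simp add: field_simps)
    moreover have "N * c = 1 - 1 / N" using N2 by (simp add: c_def power2_eq_square field_simps)
    ultimately show "(1 - fst ps 1) * fst v 1 = (1 - (1 - fst ps 1)\<^sup>2 / N) * (\<Sum>i=2..r. real (d i) * snd v i / snd ps i)"
      unfolding ps_def T_def using X1 by simp
  qed
  have uniq: "q = ps" if qc: "crit_on_level r d lam (FF r d lam) q" for q
  proof -
    obtain X Y where q: "q = (X, Y)" by fastforce
    have qD: "q \<in> DD r d lam" using qc char by blast
    have cond: "\<And>VX VY. (VX, VY) \<in> coord_space r \<Longrightarrow>
       (\<Sum>i=1..r. X i * VX i) + (\<Sum>i=2..r. lam i * Y i * VY i) = 0 \<Longrightarrow>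
       (\<Sum>i=1..r. sqrt (real (d i)) * VX i) = 0 \<Longrightarrow>
       (1 - X 1) * VX 1 = (1 - (1 - X 1)\<^sup>2 / N) * (\<Sum>i=2..r. real (d i) * VY i / Y i)"
      using qc unfolding char q by auto
    have Yp: "Y i > 0" if "i \<in> {2..r}" for i using qD that unfolding DD_def q by auto
    have hL: "(\<Sum>i=1..r. (X i)\<^sup>2) + (\<Sum>i=2..r. lam i * (Y i)\<^sup>2) = 1"
      using qD unfolding DD_def LL_def q by simp
    have hH: "(\<Sum>i=1..r. sqrt (real (d i)) * X i) = 1"
      using qD unfolding DD_def HH_def q by simp
    have hX1: "\<bar>X 1 - 1\<bar> < sqrt 2" using qD unfolding DD_def q by simp
    have qC: "q \<in> coord_space r" using qD unfolding DD_def by simp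
    define A where "A = 1 - (1 - X 1)\<^sup>2 / N"
    have A0: "A > 0"
    proof -
      have "(1 - X 1)\<^sup>2 < (sqrt 2)\<^sup>2" using hX1
        by (metis abs_minus_commute abs_ge_zero power2_abs power_strict_mono zero_less_numeral pos2)
      then have "(1 - X 1)\<^sup>2 < N" using N2 by simp
      then show ?thesis unfolding A_def using N2 by (simp add: field_simps)
    qed
    have i2: "2 \<in> {2..r}" using r2 by simp
    have l2: "lam 2 > 0" using lp i2 by auto
    have Y2: "Y 2 > 0" using Yp[OF i2] .
    have fin: "finite {1..r}" "finite {2..r}" by auto
    have st1: "real (d i) / (lam i * (Y i)\<^sup>2) = real (d 2) / (lam 2 * (Y 2)\<^sup>2)" if i: "i \<in> {2..r}" for i
    proof -
      have li: "lam i > 0" using lp i by auto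
      have Yi: "Y i > 0" using Yp[OF i] .
      define VY where "VY = (\<lambda>k. (if k = i then 1 / (lam i * Y i) else 0) + (if k = 2 then - 1 / (lam 2 * Y 2) else 0))"
      have mem: "((\<lambda>k. 0), VY) \<in> coord_space r" unfolding coord_space_def VY_def using i by auto
      have L: "(\<Sum>k=1..r. X k * 0) + (\<Sum>k=2..r. lam k * Y k * VY k) = 0"
        unfolding VY_def using sum_delta2[OF fin(2) i i2, of "\<lambda>k. lam k * Y k"] li Yi l2 Y2 by simp
      have H: "(\<Sum>k=1..r. sqrt (real (d k)) * 0) = 0" by simp
      have "(1 - X 1) * 0 = A * (\<Sum>k=2..r. real (d k) * VY k / Y k)"
        using cond[OF mem L H] unfolding A_def by simp
      then have "(\<Sum>k=2..r. real (d k) * VY k / Y k) = 0" using A0 by simp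
      then have "real (d i) * (1 / (lam i * Y i)) / Y i + real (d 2) * (- 1 / (lam 2 * Y 2)) / Y 2 = 0"
        unfolding VY_def using sum_delta2_div[OF fin(2) i i2, of "\<lambda>k. real (d k)"] by simp
      then show ?thesis by (simp add: power2_eq_square field_simps)
    qed
    have st2: "X i * sqrt (real (d 2)) = X 2 * sqrt (real (d i))" if i: "i \<in> {2..r}" for i
    proof -
      have i1: "i \<in> {1..r}" "2 \<in> {1..r}" using i r2 by auto
      define w where "w = - (X i * sqrt (real (d 2)) - X 2 * sqrt (real (d i))) / (lam 2 * Y 2)"
      define VX where "VX = (\<lambda>k. (if k = i then sqrt (real (d 2)) else 0) + (if k = 2 then - sqrt (real (d i)) else 0))"
      define VY where "VY = (\<lambda>k::nat. if k = 2 then w else (0::real))"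
      have mem: "(VX, VY) \<in> coord_space r" unfolding coord_space_def VX_def VY_def using i by auto
      have La: "(\<Sum>k=1..r. X k * VX k) = X i * sqrt (real (d 2)) + X 2 * (- sqrt (real (d i)))"
        unfolding VX_def by (rule sum_delta2[OF fin(1) i1])
      have Lb: "(\<Sum>k=2..r. lam k * Y k * VY k) = lam 2 * Y 2 * w"
        unfolding VY_def by (simp only: sum_delta_mult[OF fin(2)] i2 if_True)
      have L: "(\<Sum>k=1..r. X k * VX k) + (\<Sum>k=2..r. lam k * Y k * VY k) = 0"
        unfolding La Lb w_def using l2 Y2 by (simp add: field_simps)
      have H: "(\<Sum>k=1..r. sqrt (real (d k)) * VX k) = 0"
        unfolding VX_def using sum_delta2[OF fin(1) i1, of "\<lambda>k. sqrt (real (d k))"] by simp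
      have "(1 - X 1) * VX 1 = A * (\<Sum>k=2..r. real (d k) * VY k / Y k)"
        using cond[OF mem L H] unfolding A_def by simp
      moreover have "VX 1 = 0" unfolding VX_def using i by auto
      moreover have "(\<Sum>k=2..r. real (d k) * VY k / Y k) = real (d 2) * w / Y 2"
        unfolding VY_def using sum_delta_div[OF fin(2), of "\<lambda>k. real (d k)" 2 w Y] i2 by simp
      ultimately have "A * (real (d 2) * w / Y 2) = 0" by simp
      then have "w = 0" using A0 Y2 dp[OF i2] by simp
      then show ?thesis unfolding w_def using l2 Y2 by simp
    qed
    define w where "w = - (X 1 * sqrt (real (d 2)) - X 2) / (lam 2 * Y 2)"
    have st3: "(1 - X 1) * sqrt (real (d 2)) = A * (real (d 2) * w / Y 2)"
    proof -
      have i1: "1 \<in> {1..r}" "2 \<in> {1..r}" using r2 by auto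
      define VX where "VX = (\<lambda>k::nat. (if k = 1 then sqrt (real (d 2)) else 0) + (if k = 2 then - 1 else 0))"
      define VY where "VY = (\<lambda>k::nat. if k = 2 then w else (0::real))"
      have mem: "(VX, VY) \<in> coord_space r" unfolding coord_space_def VX_def VY_def using r2 by auto
      have La: "(\<Sum>k=1..r. X k * VX k) = X 1 * sqrt (real (d 2)) + X 2 * (- 1)"
        unfolding VX_def by (rule sum_delta2[OF fin(1) i1])
      have Lb: "(\<Sum>k=2..r. lam k * Y k * VY k) = lam 2 * Y 2 * w"
        unfolding VY_def by (simp only: sum_delta_mult[OF fin(2)] i2 if_True)
      have L: "(\<Sum>k=1..r. X k * VX k) + (\<Sum>k=2..r. lam k * Y k * VY k) = 0"
        unfolding La Lb w_def using l2 Y2 by (simp add: field_simps)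
      have H: "(\<Sum>k=1..r. sqrt (real (d k)) * VX k) = 0"
        unfolding VX_def using sum_delta2[OF fin(1) i1, of "\<lambda>k. sqrt (real (d k))"] d1 by simp
      have "(1 - X 1) * VX 1 = A * (\<Sum>k=2..r. real (d k) * VY k / Y k)"
        using cond[OF mem L H] unfolding A_def by simp
      moreover have "VX 1 = sqrt (real (d 2))" unfolding VX_def by auto
      moreover have "(\<Sum>k=2..r. real (d k) * VY k / Y k) = real (d 2) * w / Y 2"
        unfolding VY_def using sum_delta_div[OF fin(2), of "\<lambda>k. real (d k)" 2 w Y] i2 by simp
      ultimately show ?thesis by simp
    qed
    have d2: "real (d 2) \<ge> 2" using dp[OF i2] .
    have sd2: "sqrt (real (d 2)) > 0" using d2 by simp
    define t where "t = X 2 / sqrt (real (d 2))"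
    define c' where "c' = lam 2 * (Y 2)\<^sup>2 / real (d 2)"
    have c'0: "c' > 0" unfolding c'_def using l2 Y2 d2 by simp
    have Xi: "X i = t * sqrt (real (d i))" if i: "i \<in> {2..r}" for i
      using st2[OF i] sd2 unfolding t_def by (simp add: field_simps)
    have Yi: "lam i * (Y i)\<^sup>2 = c' * real (d i)" if i: "i \<in> {2..r}" for i
    proof -
      have P: "lam i * (Y i)\<^sup>2 > 0" using lp i Yp[OF i] by simp
      have P2: "lam 2 * (Y 2)\<^sup>2 > 0" using l2 Y2 by simp
      have "real (d i) * (lam 2 * (Y 2)\<^sup>2) = real (d 2) * (lam i * (Y i)\<^sup>2)"
        using frac_helper[OF st1[OF i] P P2] .
      then show ?thesis using d2 unfolding c'_def by (simp add: field_simps)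
    qed
    have U: "(\<Sum>i=2..r. sqrt (real (d i)) * X i) = t * N"
    proof -
      have "(\<Sum>i=2..r. sqrt (real (d i)) * X i) = (\<Sum>i=2..r. t * real (d i))"
        by (rule sum.cong) (auto simp: Xi)
      then show ?thesis unfolding N_def by (simp add: sum_distrib_left)
    qed
    have Q: "(\<Sum>i=2..r. (X i)\<^sup>2) = t\<^sup>2 * N"
    proof -
      have "(\<Sum>i=2..r. (X i)\<^sup>2) = (\<Sum>i=2..r. t\<^sup>2 * real (d i))"
        by (rule sum.cong) (auto simp: Xi power_mult_distrib)
      then show ?thesis unfolding N_def by (simp add: sum_distrib_left)
    qed
    have Sq: "(\<Sum>i=2..r. lam i * (Y i)\<^sup>2) = c' * N"
    proof -
      have "(\<Sum>i=2..r. lam i * (Y i)\<^sup>2) = (\<Sum>i=2..r. c' * real (d i))"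
        by (rule sum.cong) (auto simp: Yi)
      then show ?thesis unfolding N_def by (simp add: sum_distrib_left)
    qed
    have eH: "X 1 + t * N = 1" using hH sum_split1[of r "\<lambda>i. sqrt (real (d i)) * X i"] r2 d1 U by simp
    have eL: "(X 1)\<^sup>2 + t\<^sup>2 * N + c' * N = 1" using hL sum_split1[of r "\<lambda>i. (X i)\<^sup>2"] r2 Q Sq by simp
    have X2: "X 2 = t * sqrt (real (d 2))" using Xi[OF i2] .
    have e3: "(1 - X 1) * c' = - A * (X 1 - t)"
    proof -
      have "real (d 2) * w / Y 2 = - (X 1 - t) * sqrt (real (d 2)) / c'"
        unfolding w_def c'_def X2 using l2 Y2 d2 sd2
        by (simp add: field_simps power2_eq_square)
      with st3 have "(1 - X 1) * sqrt (real (d 2)) = A * (- (X 1 - t) * sqrt (real (d 2)) / c')" by simp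
      then have "((1 - X 1) * c' + A * (X 1 - t)) * sqrt (real (d 2)) = 0" using sd2 c'0 by (simp add: field_simps)
      then have "(1 - X 1) * c' + A * (X 1 - t) = 0" using sd2 by simp
      then show ?thesis by (simp add: algebra_simps)
    qed
    have tt: "t = (1 - X 1) / N" using eH N2 by (simp add: field_simps)
    have cc: "c' = (1 - (X 1)\<^sup>2 - t\<^sup>2 * N) / N" using eL N2 by (simp add: field_simps)
    have "N * ((1 - X 1) * c' + A * (X 1 - t)) = X 1 * (N - 1 + X 1)"
      unfolding cc tt A_def using N2 by (simp add: field_simps power2_eq_square)
    then have "X 1 * (N - 1 + X 1) = 0" using e3 by simp
    moreover have "N - 1 + X 1 > 0"
    proof -
      have "sqrt 2 < 2" using real_sqrt_less_iff[of 2 4] real_sqrt_four by simp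
      then show ?thesis using hX1 N2 by linarith
    qed
    ultimately have X10: "X 1 = 0" by simp
    have t1: "t = 1 / N" using tt X10 by simp
    have cc2: "c' = c" unfolding c_def using cc t1 X10 N2 by (simp add: field_simps power2_eq_square)
    have "X = Xs"
    proof
      fix k
      show "X k = Xs k"
      proof (cases "k \<in> {2..r}")
        case True then show ?thesis using Xi[OF True] t1 unfolding Xs_def by simp
      next
        case False
        show ?thesis
        proof (cases "k = 1")
          case True then show ?thesis using X10 X1 by simp
        next
          case False
          then have "k \<notin> {1..r}" using \<open>k \<notin> {2..r}\<close> by auto
          then show ?thesis using qC \<open>k \<notin> {2..r}\<close> unfolding q coord_space_def Xs_def by auto
        qed
      qed
    qed
    moreover have "Y = Ys"
    proof
      fix k
      show "Y k = Ys k"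
      proof (cases "k \<in> {2..r}")
        case True
        have lk: "lam k > 0" using lp True by auto
        have "(Y k)\<^sup>2 = c * real (d k) / lam k" using Yi[OF True] cc2 lk by (simp add: field_simps)
        then have "sqrt (c * real (d k) / lam k) = sqrt ((Y k)\<^sup>2)" by simp
        also have "\<dots> = Y k" using Yp[OF True] by simp
        finally have "sqrt (c * real (d k) / lam k) = Y k" .
        then show ?thesis using True unfolding Ys_def by simp
      next
        case False
        then show ?thesis using qC unfolding q coord_space_def Ys_def by auto
      qed
    qed
    ultimately show ?thesis unfolding q ps_def by simp
  qed
  have FFeq: "FF r d lam p = (1 - (1 - fst p 1)\<^sup>2 / N) / (\<Prod>i=2..r. (sqrt (lam i) * snd p i) powr (2 * real (d i) / N))" for p
    unfolding FF_def Let_def NN by simp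
  define K where "K = (\<Prod>i=2..r. (real (d i) / N) powr (real (d i) / N))"
  have K0: "K > 0" unfolding K_def
  proof (intro prod_pos)
    fix i assume i: "i \<in> {2..r}"
    show "0 < (real (d i) / N) powr (real (d i) / N)" using dp[OF i] N2 by simp
  qed
  have wsum: "(\<Sum>i=2..r. real (d i) / N) = 1"
  proof -
    have "(\<Sum>i=2..r. real (d i) / N) = N / N" by (simp only: N_def sum_divide_distrib)
    then show ?thesis using N2 by simp
  qed
  have FFps: "FF r d lam ps = 1 / K"
  proof -
    have "(\<Prod>i=2..r. (sqrt (lam i) * Ys i) powr (2 * real (d i) / N)) = (\<Prod>i=2..r. (c * N) powr (real (d i) / N) * (real (d i) / N) powr (real (d i) / N))"
    proof (rule prod.cong)
      fix i assume i: "i \<in> {2..r}"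
      have "(sqrt (lam i) * Ys i) powr (2 * real (d i) / N) = (lam i * (Ys i)\<^sup>2) powr (real (d i) / N)"
        using pow_conv Ypos[OF i] lp i by auto
      also have "\<dots> = ((c * N) * (real (d i) / N)) powr (real (d i) / N)"
        using Ysq[OF i] N2 by simp
      also have "\<dots> = (c * N) powr (real (d i) / N) * (real (d i) / N) powr (real (d i) / N)"
        by (rule powr_mult)
      finally show "(sqrt (lam i) * Ys i) powr (2 * real (d i) / N) = (c * N) powr (real (d i) / N) * (real (d i) / N) powr (real (d i) / N)" .
    qed simp
    also have "\<dots> = (c * N) powr (\<Sum>i=2..r. real (d i) / N) * K"
      unfolding K_def prod.distrib using c0 N2 by (simp add: powr_sum)
    also have "\<dots> = c * N * K" using wsum c0 N2 by simp
    finally have den: "(\<Prod>i=2..r. (sqrt (lam i) * Ys i) powr (2 * real (d i) / N)) = c * N * K" .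
    have cN: "c * N = 1 - 1 / N" using N2 by (simp add: c_def power2_eq_square field_simps)
    have cN0: "1 - 1 / N > 0" using N2 by simp
    show ?thesis unfolding FFeq ps_def using den cN cN0 K0 X1 N2 by simp
  qed
  have minim: "FF r d lam ps \<le> FF r d lam q" if qD: "q \<in> DD r d lam" for q
  proof -
    obtain X Y where q: "q = (X, Y)" by fastforce
    have Yp: "Y i > 0" if "i \<in> {2..r}" for i using qD that unfolding DD_def q by auto
    have hL: "(\<Sum>i=1..r. (X i)\<^sup>2) + (\<Sum>i=2..r. lam i * (Y i)\<^sup>2) = 1"
      using qD unfolding DD_def LL_def q by simp
    have hH: "(\<Sum>i=1..r. sqrt (real (d i)) * X i) = 1"
      using qD unfolding DD_def HH_def q by simp
    have hX1: "\<bar>X 1 - 1\<bar> < sqrt 2" using qD unfolding DD_def q by simp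
    define S where "S = (\<Sum>i=2..r. lam i * (Y i)\<^sup>2)"
    define U where "U = (\<Sum>i=2..r. sqrt (real (d i)) * X i)"
    define Q where "Q = (\<Sum>i=2..r. (X i)\<^sup>2)"
    have S0: "S > 0" unfolding S_def
    proof (intro sum_pos)
      fix i assume i: "i \<in> {2..r}"
      show "0 < lam i * (Y i)\<^sup>2" using Yp[OF i] lp i by simp
    qed (use r2 in auto)
    have eH: "X 1 + U = 1" using hH sum_split1[of r "\<lambda>i. sqrt (real (d i)) * X i"] r2 d1 unfolding U_def by simp
    have eL: "(X 1)\<^sup>2 + Q + S = 1" using hL sum_split1[of r "\<lambda>i. (X i)\<^sup>2"] r2 unfolding Q_def S_def by simp
    have CS: "U\<^sup>2 \<le> N * Q"
    proof -
      have "U\<^sup>2 \<le> (\<Sum>i=2..r. (sqrt (real (d i)))\<^sup>2) * Q"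
        unfolding U_def Q_def by (rule Cauchy_Schwarz_ineq_sum)
      then show ?thesis unfolding N_def by simp
    qed
    define A where "A = 1 - (1 - X 1)\<^sup>2 / N"
    have AS: "A \<ge> S"
    proof -
      have "U\<^sup>2 / N \<le> Q" using CS N2 by (simp add: field_simps)
      moreover have "1 - X 1 = U" using eH by simp
      ultimately show ?thesis unfolding A_def using eL by (smt (verit) zero_le_power2)
    qed
    define den where "den = (\<Prod>i=2..r. (sqrt (lam i) * Y i) powr (2 * real (d i) / N))"
    have den0: "den > 0" unfolding den_def using Yp lp by (intro prod_pos) force
    have denle: "den \<le> S * K"
    proof -
      define a where "a i = lam i * (Y i)\<^sup>2 * N / real (d i)" for i
      have "den = (\<Prod>i=2..r. a i powr (real (d i) / N) * (real (d i) / N) powr (real (d i) / N))"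
        unfolding den_def
      proof (rule prod.cong)
        fix i assume i: "i \<in> {2..r}"
        have "(sqrt (lam i) * Y i) powr (2 * real (d i) / N) = (lam i * (Y i)\<^sup>2) powr (real (d i) / N)"
          using pow_conv Yp[OF i] lp i by auto
        also have "\<dots> = (a i * (real (d i) / N)) powr (real (d i) / N)"
          using dp[OF i] N2 unfolding a_def by simp
        also have "\<dots> = a i powr (real (d i) / N) * (real (d i) / N) powr (real (d i) / N)"
          by (rule powr_mult)
        finally show "(sqrt (lam i) * Y i) powr (2 * real (d i) / N) = a i powr (real (d i) / N) * (real (d i) / N) powr (real (d i) / N)" .
      qed simp
      also have "\<dots> = (\<Prod>i=2..r. a i powr (real (d i) / N)) * K"
        unfolding K_def prod.distrib by simp
      also have "\<dots> \<le> (\<Sum>i=2..r. real (d i) / N * a i) * K"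
      proof (rule mult_right_mono)
        show "(\<Prod>i=2..r. a i powr (real (d i) / N)) \<le> (\<Sum>i=2..r. real (d i) / N * a i)"
        proof (rule wamgm)
          fix i assume i: "i \<in> {2..r}"
          show "a i > 0" unfolding a_def using Yp[OF i] lp i dp[OF i] N2 by auto
          show "real (d i) / N > 0" using dp[OF i] N2 by auto
        qed (use wsum in auto)
      qed (use K0 in auto)
      also have "(\<Sum>i=2..r. real (d i) / N * a i) = S"
        unfolding S_def
      proof (rule sum.cong)
        fix i assume i: "i \<in> {2..r}"
        show "real (d i) / N * a i = lam i * (Y i)\<^sup>2" unfolding a_def using dp[OF i] N2 by simp
      qed simp
      finally show ?thesis .
    qed
    have "FF r d lam q = A / den" unfolding FFeq q A_def den_def by simp
    also have "A / den \<ge> A / (S * K)"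
      using den0 denle AS S0 by (intro divide_left_mono) auto
    also have "A / (S * K) \<ge> S / (S * K)" using AS S0 K0 by (intro divide_right_mono) auto
    also have "S / (S * K) = 1 / K" using S0 by simp
    finally show ?thesis using FFps by simp
  qed
  show ?thesis using pscrit uniq minim by blast
qed

end
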